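(* Let $E$ be a finite nonempty set, $X\in\mathcal{X}(2)\setminus\mathcal{X}^*(2)$, and let $f:2^E\to\mathbb{N}$ and $S,T\subseteq E$ satisfy: $X=\mathbb{B}_f(2)$; for every $U\subseteq E$ there is $\vec x\in\mathbb{B}_f(2)$ with $x(U)=f(U)$; and $f(S)=f(T)=f(S\cap T)=1$, $f(S\cup T)=2$. Then there are four distinct elements $e_1,e_2,e_3,e_4\in E$ and two vectors $\vec x,\vec y\in\mathbb{B}_f(2)$ such that: (1) $x(e_1)=x(e_2)=1$ with $e_1\in E\setminus(S\cup T)$ and $e_2\in S\cap T$; (2) $y(e_3)=y(e_4)=1$ with $e_3\in S\setminus T$ and $e_4\in T\setminus S$; (3) every $\vec z\in\mathbb{B}_f(2)\setminus\{\vec x,\vec y\}$ with $\mathrm{supp}(\vec z)\subseteq\{e_1,e_2,e_3,e_4\}$ satisfies $\mathrm{supp}(\vec z)\in\{\{e_1,e_3\},\{e_1,e_4\},\{e_1\}\}$.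
   Context: $\mathbb{N}=\{0,1,2,\dots\}$; $x(U)=\sum_{e\in U}x_e$, $x(e)=x_e$; $\mathrm{supp}(\vec x)=\{e: x_e\neq0\}$. For $f:2^E\to\mathbb{N}$, $\mathbb{B}_f(d)=\{\vec x\in\mathbb{N}^E: x(U)\le f(U)\ \forall U\subseteq E,\ x(E)=d\}$. $f$ is strictly positive if $f(U)>0$ for all nonempty $U$, normalized if $f(\emptyset)=0$, monotonic if $f(U)\le f(V)$ for $U\subseteq V$. $\mathcal{X}(d)=\{\mathbb{B}_f(d): f \text{ strictly positive, normalized, monotonic}\}$, $\mathcal{X}^*(d)=\{\mathbb{B}_f(d): f\text{ strictly positive, normalized, monotonic, submodular}\}$. *)

theory Defs
  imports Main
begin

text \<open>Vectors in N^E are modelled as functions 'a => nat vanishing outside E.\<close>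

definition vec_sum :: "('a \<Rightarrow> nat) \<Rightarrow> 'a set \<Rightarrow> nat" where
  "vec_sum x U = (\<Sum>e\<in>U. x e)"

definition supp :: "'a set \<Rightarrow> ('a \<Rightarrow> nat) \<Rightarrow> 'a set" where
  "supp E x = {e \<in> E. x e \<noteq> 0}"

definition polymat_B :: "'a set \<Rightarrow> ('a set \<Rightarrow> nat) \<Rightarrow> nat \<Rightarrow> ('a \<Rightarrow> nat) set" where
  "polymat_B E f d = {x. (\<forall>e. e \<notin> E \<longrightarrow> x e = 0)
      \<and> (\<forall>U. U \<subseteq> E \<longrightarrow> vec_sum x U \<le> f U) \<and> vec_sum x E = d}"

definition strictly_positive :: "'a set \<Rightarrow> ('a set \<Rightarrow> nat) \<Rightarrow> bool" where
  "strictly_positive E f = (\<forall>U. U \<subseteq> E \<longrightarrow> U \<noteq> {} \<longrightarrow> f U > 0)"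

definition normalized :: "('a set \<Rightarrow> nat) \<Rightarrow> bool" where
  "normalized f = (f {} = 0)"

definition monotonic :: "'a set \<Rightarrow> ('a set \<Rightarrow> nat) \<Rightarrow> bool" where
  "monotonic E f = (\<forall>U V. U \<subseteq> V \<longrightarrow> V \<subseteq> E \<longrightarrow> f U \<le> f V)"

definition submodular :: "'a set \<Rightarrow> ('a set \<Rightarrow> nat) \<Rightarrow> bool" where
  "submodular E f = (\<forall>U V. U \<subseteq> E \<longrightarrow> V \<subseteq> E \<longrightarrow>
      f (U \<union> V) + f (U \<inter> V) \<le> f U + f V)"

definition calX :: "'a set \<Rightarrow> nat \<Rightarrow> ('a \<Rightarrow> nat) set set" where
  "calX E d = {polymat_B E f d | f. strictly_positive E f \<and> normalized f \<and> monotonic E f}"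

definition calX_star :: "'a set \<Rightarrow> nat \<Rightarrow> ('a \<Rightarrow> nat) set set" where
  "calX_star E d = {polymat_B E f d | f. strictly_positive E f \<and> normalized f
      \<and> monotonic E f \<and> submodular E f}"

end

theory Submission
  imports Defs
begin

lemma B_le: "x \<in> polymat_B E f d \<Longrightarrow> U \<subseteq> E \<Longrightarrow> vec_sum x U \<le> f U"
  by (simp add: polymat_B_def)

lemma B_tot: "x \<in> polymat_B E f d \<Longrightarrow> vec_sum x E = d"
  by (simp add: polymat_B_def)

lemma B_out: "x \<in> polymat_B E f d \<Longrightarrow> e \<notin> E \<Longrightarrow> x e = 0"
  by (simp add: polymat_B_def)

lemma sum_one_pt:
  fixes x :: "'a \<Rightarrow> nat"
  assumes "finite A" "sum x A = 1"
  shows "\<exists>e\<in>A. x e = 1"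
proof -
  have "\<exists>e\<in>A. x e \<noteq> 0" using assms(2) sum.neutral[of A x] by (metis zero_neq_one)
  then obtain e where e: "e \<in> A" "x e \<noteq> 0" by blast
  have "x e \<le> sum x A" using assms(1) e(1) by (simp add: member_le_sum)
  thus ?thesis using e assms(2) by (intro bexI[of _ e]) auto
qed

lemma split_sub:
  fixes x :: "'a \<Rightarrow> nat"
  assumes "finite A" "B \<subseteq> A"
  shows "sum x A = sum x (A - B) + sum x B"
  using assms by (metis add.commute finite_subset sum.subset_diff)

lemma only_two:
  assumes "finite E" "x \<in> polymat_B E f 2" "a \<in> E" "b \<in> E" "a \<noteq> b" "x a = 1" "x b = 1"
    "e \<notin> {a, b}"
  shows "x e = 0"
proof (cases "e \<in> E")
  case False thus ?thesis using B_out[OF assms(2)] by simp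
next
  case True
  have "sum x E = sum x (E - {a,b}) + sum x {a,b}"
    by (rule split_sub[OF assms(1)]) (use assms(3,4) in simp)
  moreover have "sum x {a,b} = 2" using assms(5,6,7) by simp
  moreover have "sum x E = 2" using B_tot[OF assms(2)] by (simp add: vec_sum_def)
  ultimately have "sum x (E - {a,b}) = 0" by simp
  hence "\<forall>e\<in>E - {a,b}. x e = 0" using assms(1) by simp
  thus ?thesis using True assms(8) by blast
qed

theorem lemma6p3:
  fixes E :: "'a set" and X :: "('a \<Rightarrow> nat) set" and f :: "'a set \<Rightarrow> nat"
    and S T :: "'a set"
  assumes "finite E" and "E \<noteq> {}"
    and "X \<in> calX E 2 - calX_star E 2"
    and "X = polymat_B E f 2"
    and "\<forall>U. U \<subseteq> E \<longrightarrow> (\<exists>x \<in> polymat_B E f 2. vec_sum x U = f U)"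
    and "S \<subseteq> E" and "T \<subseteq> E"
    and "f S = 1" and "f T = 1" and "f (S \<inter> T) = 1" and "f (S \<union> T) = 2"
  shows "\<exists>e1 e2 e3 e4 x y.
      e1 \<in> E \<and> e2 \<in> E \<and> e3 \<in> E \<and> e4 \<in> E \<and> distinct [e1, e2, e3, e4] \<and>
      x \<in> polymat_B E f 2 \<and> y \<in> polymat_B E f 2 \<and>
      x e1 = 1 \<and> x e2 = 1 \<and> e1 \<in> E - (S \<union> T) \<and> e2 \<in> S \<inter> T \<and>
      y e3 = 1 \<and> y e4 = 1 \<and> e3 \<in> S - T \<and> e4 \<in> T - S \<and>
      (\<forall>z \<in> polymat_B E f 2 - {x, y}. supp E z \<subseteq> {e1, e2, e3, e4} \<longrightarrow>
         supp E z \<in> {{e1, e3}, {e1, e4}, {e1}})"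
proof -
  have fS: "finite S" "finite T" using assms(1,6,7) finite_subset by auto
  have un: "\<And>g::'a\<Rightarrow>nat. sum g (S \<union> T) + sum g (S \<inter> T) = sum g S + sum g T"
    using fS by (rule sum.union_inter)
  obtain y where y: "y \<in> polymat_B E f 2" "vec_sum y (S \<union> T) = 2"
    using assms(5,6,7,11) by (metis Un_subset_iff)
  have yS: "sum y S \<le> 1" "sum y T \<le> 1"
    using B_le[OF y(1) assms(6)] B_le[OF y(1) assms(7)] assms(8,9) by (auto simp: vec_sum_def)
  have "sum y (S \<union> T) = 2" using y(2) by (simp add: vec_sum_def)
  with un[of y] yS have yv: "sum y S = 1" "sum y T = 1" "sum y (S \<inter> T) = 0" by auto
  have d1: "S - S \<inter> T = S - T" "T - S \<inter> T = T - S" by auto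
  have "sum y S = sum y (S - T) + sum y (S \<inter> T)"
    using split_sub[OF fS(1), of "S \<inter> T" y] by (simp only: d1) blast
  hence "sum y (S - T) = 1" using yv by linarith
  then obtain e3 where e3: "e3 \<in> S - T" "y e3 = 1" using sum_one_pt fS by blast
  have "sum y T = sum y (T - S) + sum y (S \<inter> T)"
    using split_sub[OF fS(2), of "S \<inter> T" y] by (simp only: d1) blast
  hence "sum y (T - S) = 1" using yv by linarith
  then obtain e4 where e4: "e4 \<in> T - S" "y e4 = 1" using sum_one_pt fS by blast
  obtain x where x: "x \<in> polymat_B E f 2" "vec_sum x (S \<inter> T) = 1"
    using assms(5,6,10) by (metis inf.coboundedI1)
  have xS: "sum x S \<le> 1" "sum x T \<le> 1"
    using B_le[OF x(1) assms(6)] B_le[OF x(1) assms(7)] assms(8,9) by (auto simp: vec_sum_def)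
  have xi: "sum x (S \<inter> T) = 1" using x(2) by (simp add: vec_sum_def)
  then obtain e2 where e2: "e2 \<in> S \<inter> T" "x e2 = 1" using sum_one_pt fS by blast
  have "sum x (S \<inter> T) \<le> sum x (S \<union> T)" using fS by (intro sum_mono2) auto
  hence "sum x (S \<union> T) = 1" using un[of x] xS xi by auto
  moreover have "sum x E = sum x (E - (S \<union> T)) + sum x (S \<union> T)"
    using assms(1,6,7) by (intro split_sub) auto
  moreover have "sum x E = 2" using B_tot[OF x(1)] by (simp add: vec_sum_def)
  ultimately have "sum x (E - (S \<union> T)) = 1" by simp
  then obtain e1 where e1: "e1 \<in> E - (S \<union> T)" "x e1 = 1" using sum_one_pt assms(1) by blast
  have inE: "e1 \<in> E" "e2 \<in> E" "e3 \<in> E" "e4 \<in> E" using e1 e2 e3 e4 assms(6,7) by auto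
  have dist: "distinct [e1, e2, e3, e4]" using e1 e2 e3 e4 by auto
  have x0: "\<And>e. e \<notin> {e1, e2} \<Longrightarrow> x e = 0"
    using only_two[OF assms(1) x(1) inE(1,2)] dist e1(2) e2(2) by auto
  have y0: "\<And>e. e \<notin> {e3, e4} \<Longrightarrow> y e = 0"
    using only_two[OF assms(1) y(1) inE(3,4)] dist e3(2) e4(2) by auto
  have last: "supp E z \<in> {{e1, e3}, {e1, e4}, {e1}}"
    if z: "z \<in> polymat_B E f 2" "z \<noteq> x" "z \<noteq> y" "supp E z \<subseteq> {e1, e2, e3, e4}" for z
  proof -
    have z0: "\<And>e. e \<notin> {e1, e2, e3, e4} \<Longrightarrow> z e = 0"
      using z(4) B_out[OF z(1)] unfolding supp_def by blast
    have "sum z E = sum z (E - {e1,e2,e3,e4}) + sum z {e1,e2,e3,e4}"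
      using assms(1) inE by (intro split_sub) auto
    moreover have "sum z (E - {e1,e2,e3,e4}) = 0" using z0 by simp
    moreover have "sum z E = 2" using B_tot[OF z(1)] by (simp add: vec_sum_def)
    ultimately have tot: "z e1 + z e2 + z e3 + z e4 = 2" using dist by simp
    have "z e2 \<le> sum z (S \<inter> T)" using fS e2 by (intro member_le_sum) auto
    moreover have "sum z (S \<inter> T) \<le> 1"
      using B_le[OF z(1), of "S \<inter> T"] assms(6,10) by (auto simp: vec_sum_def)
    ultimately have b2: "z e2 \<le> 1" by simp
    have "sum z {e2, e3} \<le> sum z S" using fS e2 e3 by (intro sum_mono2) auto
    moreover have "sum z S \<le> 1"
      using B_le[OF z(1), of "S"] assms(6,8) by (auto simp: vec_sum_def)
    ultimately have b3: "z e2 + z e3 \<le> 1" using dist by simp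
    have "sum z {e2, e4} \<le> sum z T" using fS e2 e4 by (intro sum_mono2) auto
    moreover have "sum z T \<le> 1"
      using B_le[OF z(1), of "T"] assms(7,9) by (auto simp: vec_sum_def)
    ultimately have b4: "z e2 + z e4 \<le> 1" using dist by simp
    have nx: "\<not> (z e1 = 1 \<and> z e2 = 1)"
    proof
      assume h: "z e1 = 1 \<and> z e2 = 1"
      have "\<And>e. e \<notin> {e1, e2} \<Longrightarrow> z e = 0"
        using only_two[OF assms(1) z(1) inE(1,2)] dist h by auto
      hence zz: "\<And>e. e \<noteq> e1 \<Longrightarrow> e \<noteq> e2 \<Longrightarrow> z e = 0" by blast
      have "z = x"
      proof
        fix e
        show "z e = x e"
          using zz[of e] x0[of e] h e1 e2 by (cases "e = e1"; cases "e = e2") auto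
      qed
      thus False using z(2) by blast
    qed
    have ny: "\<not> (z e3 = 1 \<and> z e4 = 1)"
    proof
      assume h: "z e3 = 1 \<and> z e4 = 1"
      have "\<And>e. e \<notin> {e3, e4} \<Longrightarrow> z e = 0"
        using only_two[OF assms(1) z(1) inE(3,4)] dist h by auto
      hence zz: "\<And>e. e \<noteq> e3 \<Longrightarrow> e \<noteq> e4 \<Longrightarrow> z e = 0" by blast
      have "z = y"
      proof
        fix e
        show "z e = y e"
          using zz[of e] y0[of e] h e3 e4 by (cases "e = e3"; cases "e = e4") auto
      qed
      thus False using z(3) by blast
    qed
    have sz: "supp E z = {e \<in> {e1,e2,e3,e4}. z e \<noteq> 0}"
    proof (rule set_eqI)
      fix e
      show "e \<in> supp E z \<longleftrightarrow> e \<in> {e \<in> {e1,e2,e3,e4}. z e \<noteq> 0}"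
        using z0[of e] inE unfolding supp_def by (cases "e \<in> {e1, e2, e3, e4}") auto
    qed
    have z2: "z e2 = 0"
    proof (rule ccontr)
      assume "z e2 \<noteq> 0"
      hence h2: "z e2 = 1" using b2 by simp
      hence "z e3 = 0" "z e4 = 0" using b3 b4 by simp_all
      hence "z e1 = 1" using tot h2 by simp
      thus False using nx h2 by simp
    qed
    have o3: "z e3 = 0 \<or> z e3 = 1" using b3 by arith
    have o4: "z e4 = 0 \<or> z e4 = 1" using b4 by arith
    have cases: "(z e3 = 1 \<and> z e4 = 0 \<and> z e1 = 1) \<or> (z e3 = 0 \<and> z e4 = 1 \<and> z e1 = 1)
        \<or> (z e3 = 0 \<and> z e4 = 0 \<and> z e1 = 2)"
      using o3 o4
    proof (elim disjE)
      assume "z e3 = 1" "z e4 = 1" thus ?thesis using ny by simp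
    qed (use tot z2 in simp_all)
    have dd: "e1 \<noteq> e2" "e1 \<noteq> e3" "e1 \<noteq> e4" "e2 \<noteq> e3" "e2 \<noteq> e4" "e3 \<noteq> e4"
      using dist by auto
    from cases show ?thesis
    proof (elim disjE conjE)
      assume "z e3 = 1" "z e4 = 0" "z e1 = 1"
      hence "{e \<in> {e1,e2,e3,e4}. z e \<noteq> 0} = {e1, e3}" using z2 dd by auto
      thus ?thesis unfolding sz by simp
    next
      assume "z e3 = 0" "z e4 = 1" "z e1 = 1"
      hence "{e \<in> {e1,e2,e3,e4}. z e \<noteq> 0} = {e1, e4}" using z2 dd by auto
      thus ?thesis unfolding sz by simp
    next
      assume "z e3 = 0" "z e4 = 0" "z e1 = 2"
      hence "{e \<in> {e1,e2,e3,e4}. z e \<noteq> 0} = {e1}" using z2 dd by auto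
      thus ?thesis unfolding sz by simp
    qed
  qed
  have lastb: "\<forall>z \<in> polymat_B E f 2 - {x, y}. supp E z \<subseteq> {e1, e2, e3, e4} \<longrightarrow>
         supp E z \<in> {{e1, e3}, {e1, e4}, {e1}}"
  proof (intro ballI impI)
    fix z assume a: "z \<in> polymat_B E f 2 - {x, y}" "supp E z \<subseteq> {e1, e2, e3, e4}"
    have "z \<in> polymat_B E f 2" "z \<noteq> x" "z \<noteq> y" using a(1) by blast+
    thus "supp E z \<in> {{e1, e3}, {e1, e4}, {e1}}" using last a(2) by blast
  qed
  show ?thesis
    apply (rule exI[of _ e1], rule exI[of _ e2], rule exI[of _ e3], rule exI[of _ e4])
    apply (rule exI[of _ x], rule exI[of _ y])
    apply (intro conjI)
    by (insert inE dist x(1) y(1) e1 e2 e3 e4 lastb; assumption)+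
qed

end
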